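(* In the setting of the context, the market $(S^0,S)$ admits strong $\rho$-arbitrage if and only if $\rho_1 < 0$, where $\rho_1 := \inf\{\rho(X_\pi) : \pi \in \mathbb{R}^d,\ \mathbb{E}[X_\pi] = 1\}$.
   Context: Let $(\Omega,\mathcal{F},\mathbb{P})$ be a probability space. The market consists of a riskless asset with $S^0_0 = 1$, $S^0_1 = 1+r$, $r > -1$, and $d$ risky assets $S^1,\dots,S^d$ with constants $S^i_0 > 0$ and real-valued $\mathcal{F}$-measurable $S^i_1$. Returns: $R^i := (S^i_1 - S^i_0)/S^i_0$, $R = (R^1,\dots,R^d)$. Standing assumptions: nonredundancy (if $\theta\in\mathbb{R}^{1+d}$ and $\sum_{i=0}^d \theta^i S^i_t = 0$ a.s. for $t\in\{0,1\}$ then $\theta=0$); $R^i \in L^1(\mathbb{P})$, $\mu^i := \mathbb{E}[R^i]$; $\mu^i \ne r$ for some $i$. Portfolio $\pi\in\mathbb{R}^d$ has excess return $X_\pi := \pi\cdot(R - r\mathbf{1})$. $L$ is a Riesz space with $L^\infty\subset L\subset L^1$ containing all $X_\pi$, and $\rho: L\to(-\infty,\infty]$ is monotone, cash-invariant ($\rho(X+c)=\rho(X)-c$) and positively homogeneous ($\rho(\lambda X)=\lambda\rho(X)$, $\lambda\ge0$). The market admits strong $\rho$-arbitrage if for every portfolio $\pi\in\mathbb{R}^d$ there exists $\pi'\in\mathbb{R}^d$ with $\mathbb{E}[X_{\pi'}] > \mathbb{E}[X_\pi]$ and $\rho(X_{\pi'}) < \rho(X_\pi)$. *)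

theory Defs
  imports "HOL-Probability.Probability"
begin

definition ret :: "('d \<Rightarrow> real) \<Rightarrow> ('d \<Rightarrow> 'a \<Rightarrow> real) \<Rightarrow> 'd \<Rightarrow> 'a \<Rightarrow> real" where
  "ret S0 S1 i = (\<lambda>\<omega>. (S1 i \<omega> - S0 i) / S0 i)"

definition excess_ret ::
  "('d::finite \<Rightarrow> real) \<Rightarrow> ('d \<Rightarrow> 'a \<Rightarrow> real) \<Rightarrow> real \<Rightarrow> ('d \<Rightarrow> real) \<Rightarrow> 'a \<Rightarrow> real" where
  "excess_ret S0 S1 r \<pi> = (\<lambda>\<omega>. \<Sum>i\<in>UNIV. \<pi> i * (ret S0 S1 i \<omega> - r))"

definition nonredundant ::
  "'a measure \<Rightarrow> ('d::finite \<Rightarrow> real) \<Rightarrow> ('d \<Rightarrow> 'a \<Rightarrow> real) \<Rightarrow> real \<Rightarrow> bool" where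
  "nonredundant M S0 S1 r \<longleftrightarrow>
     (\<forall>(\<theta>0::real) (\<theta>::'d \<Rightarrow> real).
        \<theta>0 * 1 + (\<Sum>i\<in>UNIV. \<theta> i * S0 i) = 0 \<and>
        (AE \<omega> in M. \<theta>0 * (1 + r) + (\<Sum>i\<in>UNIV. \<theta> i * S1 i \<omega>) = 0)
        \<longrightarrow> \<theta>0 = 0 \<and> (\<forall>i. \<theta> i = 0))"

text \<open>L is a Riesz space (vector sublattice) of random variables with L^\<infinity> \<subseteq> L \<subseteq> L^1.
  Random variables are represented by functions; L^\<infinity> = essentially bounded measurable functions.\<close>
definition riesz_between :: "'a measure \<Rightarrow> ('a \<Rightarrow> real) set \<Rightarrow> bool" where
  "riesz_between M L \<longleftrightarrow>
     (\<forall>X\<in>L. integrable M X) \<and>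
     (\<forall>X. X \<in> borel_measurable M \<and> (\<exists>C. AE \<omega> in M. \<bar>X \<omega>\<bar> \<le> C) \<longrightarrow> X \<in> L) \<and>
     (\<forall>X\<in>L. \<forall>Y\<in>L. (\<lambda>\<omega>. X \<omega> + Y \<omega>) \<in> L) \<and>
     (\<forall>X\<in>L. \<forall>c::real. (\<lambda>\<omega>. c * X \<omega>) \<in> L) \<and>
     (\<forall>X\<in>L. \<forall>Y\<in>L. (\<lambda>\<omega>. max (X \<omega>) (Y \<omega>)) \<in> L)"

definition risk_measure :: "'a measure \<Rightarrow> ('a \<Rightarrow> real) set \<Rightarrow> (('a \<Rightarrow> real) \<Rightarrow> ereal) \<Rightarrow> bool" where
  "risk_measure M L \<rho> \<longleftrightarrow>
     (\<forall>X\<in>L. \<rho> X \<noteq> -\<infinity>) \<and>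
     (\<forall>X\<in>L. \<forall>Y\<in>L. (AE \<omega> in M. X \<omega> \<le> Y \<omega>) \<longrightarrow> \<rho> Y \<le> \<rho> X) \<and>
     (\<forall>X\<in>L. \<forall>c::real. \<rho> (\<lambda>\<omega>. X \<omega> + c) = \<rho> X - ereal c) \<and>
     (\<forall>X\<in>L. \<forall>t::real. t \<ge> 0 \<longrightarrow> \<rho> (\<lambda>\<omega>. t * X \<omega>) = ereal t * \<rho> X)"

definition strong_rho_arbitrage ::
  "'a measure \<Rightarrow> (('a \<Rightarrow> real) \<Rightarrow> ereal) \<Rightarrow> ('d::finite \<Rightarrow> real) \<Rightarrow> ('d \<Rightarrow> 'a \<Rightarrow> real) \<Rightarrow> real \<Rightarrow> bool" where
  "strong_rho_arbitrage M \<rho> S0 S1 r \<longleftrightarrow>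
     (\<forall>\<pi>::'d \<Rightarrow> real. \<exists>\<pi>'::'d \<Rightarrow> real.
        integral\<^sup>L M (excess_ret S0 S1 r \<pi>') > integral\<^sup>L M (excess_ret S0 S1 r \<pi>) \<and>
        \<rho> (excess_ret S0 S1 r \<pi>') < \<rho> (excess_ret S0 S1 r \<pi>))"

definition rho1 ::
  "'a measure \<Rightarrow> (('a \<Rightarrow> real) \<Rightarrow> ereal) \<Rightarrow> ('d::finite \<Rightarrow> real) \<Rightarrow> ('d \<Rightarrow> 'a \<Rightarrow> real) \<Rightarrow> real \<Rightarrow> ereal" where
  "rho1 M \<rho> S0 S1 r =
     Inf {\<rho> (excess_ret S0 S1 r \<pi>) | \<pi>::'d \<Rightarrow> real. integral\<^sup>L M (excess_ret S0 S1 r \<pi>) = 1}"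

end

theory Submission
  imports Defs
begin

lemma er_scale:
  "excess_ret S0 S1 r (\<lambda>i. t * \<pi> i) = (\<lambda>\<omega>. t * excess_ret S0 S1 r \<pi> \<omega>)"
  unfolding excess_ret_def by (auto simp: sum_distrib_left mult.assoc)

theorem theorem3p18:
  fixes M :: "'a measure" and r :: real
    and S0 :: "'d::finite \<Rightarrow> real" and S1 :: "'d \<Rightarrow> 'a \<Rightarrow> real"
    and L :: "('a \<Rightarrow> real) set" and \<rho> :: "('a \<Rightarrow> real) \<Rightarrow> ereal"
  assumes "prob_space M"
    and "r > -1"
    and "\<And>i. S0 i > 0"
    and "\<And>i. S1 i \<in> borel_measurable M"
    and "nonredundant M S0 S1 r"
    and "\<And>i. integrable M (ret S0 S1 i)"
    and "\<exists>i. integral\<^sup>L M (ret S0 S1 i) \<noteq> r"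
    and "riesz_between M L"
    and "\<And>\<pi>. excess_ret S0 S1 r \<pi> \<in> L"
    and "risk_measure M L \<rho>"
  shows "strong_rho_arbitrage M \<rho> S0 S1 r \<longleftrightarrow> rho1 M \<rho> S0 S1 r < 0"
proof -
  let ?X = "excess_ret S0 S1 r"
  let ?E = "\<lambda>\<pi>. integral\<^sup>L M (?X \<pi>)"
  have hom: "\<And>\<pi> t. t \<ge> 0 \<Longrightarrow> \<rho> (?X (\<lambda>i. t * \<pi> i)) = ereal t * \<rho> (?X \<pi>)"
    using assms(9,10) unfolding risk_measure_def by (simp add: er_scale)
  have nm: "\<And>\<pi>. \<rho> (?X \<pi>) \<noteq> -\<infinity>"
    using assms(9,10) unfolding risk_measure_def by simp
  have Esc: "\<And>\<pi> t. ?E (\<lambda>i. t * \<pi> i) = t * ?E \<pi>"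
    by (simp add: er_scale)
  have z: "\<rho> (?X (\<lambda>i. 0)) = 0"
    using hom[of 0 "\<lambda>i. 0"] by (simp add: zero_ereal_def[symmetric])
  have Ez: "?E (\<lambda>i. 0) = 0" using Esc[of 0 "\<lambda>i. 0"] by simp
  show ?thesis
  proof
    assume "strong_rho_arbitrage M \<rho> S0 S1 r"
    then obtain p where p: "?E p > 0" "\<rho> (?X p) < 0"
    proof -
      from \<open>strong_rho_arbitrage M \<rho> S0 S1 r\<close> obtain p where
        "?E p > ?E (\<lambda>i. 0)" "\<rho> (?X p) < \<rho> (?X (\<lambda>i. 0))"
        unfolding strong_rho_arbitrage_def by blast
      with z Ez that show ?thesis by simp
    qed
    define t where "t = 1 / ?E p"
    have t: "t > 0" using p t_def by simp
    have "?E (\<lambda>i. t * p i) = 1" unfolding Esc using p t_def by simp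
    moreover have "\<rho> (?X (\<lambda>i. t * p i)) < 0"
      using hom[of t p] t p(2) nm[of p]
      by (metis ereal_less(2) ereal_mult_less_0_iff ereal_less_eq(3) less_imp_le)
    ultimately have "rho1 M \<rho> S0 S1 r \<le> \<rho> (?X (\<lambda>i. t * p i))"
      unfolding rho1_def by (intro Inf_lower) blast
    with \<open>\<rho> (?X (\<lambda>i. t * p i)) < 0\<close> show "rho1 M \<rho> S0 S1 r < 0" by simp
  next
    assume "rho1 M \<rho> S0 S1 r < 0"
    then obtain p where p: "?E p = 1" "\<rho> (?X p) < 0"
      unfolding rho1_def by (auto simp: Inf_less_iff)
    obtain c where c: "\<rho> (?X p) = ereal c" "c < 0"
      using p(2) nm[of p] by (cases "\<rho> (?X p)") auto
    show "strong_rho_arbitrage M \<rho> S0 S1 r"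
      unfolding strong_rho_arbitrage_def
    proof
      fix \<pi>
      show "\<exists>\<pi>'. ?E \<pi>' > ?E \<pi> \<and> \<rho> (?X \<pi>') < \<rho> (?X \<pi>)"
      proof (cases "\<rho> (?X \<pi>)")
        case (real a)
        define t where "t = max (?E \<pi> + 1) (max 1 (\<bar>a\<bar> / (-c) + 1))"
        have t1: "t \<ge> 1" "t > ?E \<pi>" unfolding t_def by auto
        have "t \<ge> \<bar>a\<bar> / (-c) + 1" unfolding t_def by auto
        hence "t * (-c) \<ge> (\<bar>a\<bar> / (-c) + 1) * (-c)" using c(2) by (intro mult_right_mono) auto
        moreover have "(\<bar>a\<bar> / (-c) + 1) * (-c) = \<bar>a\<bar> - c" using c(2) by (simp add: algebra_simps)
        ultimately have "t * (-c) \<ge> \<bar>a\<bar> - c" by simp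
        hence "t * c < a" using c(2) by linarith
        hence "\<rho> (?X (\<lambda>i. t * p i)) < \<rho> (?X \<pi>)" using hom[of t p] t1 c real by simp
        moreover have "?E (\<lambda>i. t * p i) > ?E \<pi>" using Esc p t1 by simp
        ultimately show ?thesis by blast
      next
        case PInf
        define t where "t = max (?E \<pi> + 1) 1"
        have t1: "t \<ge> 1" "t > ?E \<pi>" unfolding t_def by auto
        have "\<rho> (?X (\<lambda>i. t * p i)) < \<rho> (?X \<pi>)" using hom[of t p] t1 c PInf by simp
        moreover have "?E (\<lambda>i. t * p i) > ?E \<pi>" using Esc p t1 by simp
        ultimately show ?thesis by blast
      next
        case MInf with nm show ?thesis by simp
      qed
    qed
  qed
qed

end
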